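(* In the setting described in the context, for any $a_1,a_2\in\mathfrak{z}$ and any positive integer $p$, $$\mathrm{S}^r(a_1^pa_2)=\sum_{\substack{i,j\geq 0\\ i+j\le p}}(-1)^j r^{p-i}(1-r)^i\, a_1^i a_2 a_1^j\ast \mathrm{S}(a_1^{p-i-j}),$$ where $\mathrm{S}=\mathrm{S}^1$. Equivalently, for a formal variable $u$, $\mathrm{S}^r\!\left(\frac{1}{1-a_1u}a_2\right)=\frac{1}{1-a_1(1-r)u}\,a_2\,\frac{1}{1+a_1ru}\ast \mathrm{S}\!\left(\frac{1}{1-a_1ru}\right)$.
   Context: $\mathfrak{A}$ is a commutative $\mathbb{Q}$-algebra, $A$ a set of non-commutative letters, $\mathfrak{h}^1$ the non-commutative polynomial algebra over $\mathfrak{A}$ generated by $A$, and $\mathfrak{z}$ the $\mathfrak{A}$-span of $A$, equipped with a commutative (not necessarily unital) $\mathfrak{A}$-algebra product $\circ$. This acts on $\mathfrak{h}^1$ by $\mathfrak{A}$-linearity and $a\circ 1_w=0$, $a\circ(bw)=(a\circ b)w$ ($a,b\in A$, $w$ a word, $1_w$ the empty word). The harmonic product $\ast$ on $\mathfrak{h}^1$ is the $\mathfrak{A}$-bilinear product with $1_w\ast w=w\ast 1_w=w$ and $aw_1\ast bw_2=a(w_1\ast bw_2)+b(aw_1\ast w_2)+(a\circ b)(w_1\ast w_2)$ for $a,b\in A$ and words $w,w_1,w_2$ (extended $r$-linearly and to formal power series in $u$). For a variable $r$, $\mathrm{S}^r$ is the $\mathfrak{A}[r]$-linear map on $\mathfrak{h}^1[r]$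 with $\mathrm{S}^r(1_w)=1_w$ and $\mathrm{S}^r(aw)=a\mathrm{S}^r(w)+r\,a\circ\mathrm{S}^r(w)$ for $a\in A$ and words $w$; $\mathrm{S}:=\mathrm{S}^1$. Juxtaposition is concatenation; $a^n$ is the $n$-fold concatenation power ($a^0=1_w$). *)

theory Defs
  imports "HOL-Library.Poly_Mapping" "HOL-Computational_Algebra.Polynomial"
begin

text \<open>Non-commutative polynomials over a coefficient ring 'b in letters of type 'l:
  finitely supported maps from words (lists of letters) to coefficients.
  The span z of the letters is represented by finitely supported maps 'l to 'b.
  The product on z is given by structure constants c a b (the element a o b of z).\<close>

type_synonym ('l, 'b) ncpoly = "'l list \<Rightarrow>\<^sub>0 'b"
type_synonym ('l, 'b) zel = "'l \<Rightarrow>\<^sub>0 'b"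

definition scale :: "'b::comm_ring_1 \<Rightarrow> ('k \<Rightarrow>\<^sub>0 'b) \<Rightarrow> ('k \<Rightarrow>\<^sub>0 'b)" where
  "scale k p = Poly_Mapping.map (\<lambda>v. k * v) p"

definition ncmul :: "('l, 'b::comm_ring_1) ncpoly \<Rightarrow> ('l, 'b) ncpoly \<Rightarrow> ('l, 'b) ncpoly" where
  "ncmul p q = (\<Sum>v\<in>Poly_Mapping.keys p. \<Sum>w\<in>Poly_Mapping.keys q. Poly_Mapping.single (v @ w) (Poly_Mapping.lookup p v * Poly_Mapping.lookup q w))"

primrec ncpow :: "('l, 'b::comm_ring_1) ncpoly \<Rightarrow> nat \<Rightarrow> ('l, 'b) ncpoly" where
  "ncpow x 0 = Poly_Mapping.single [] 1"
| "ncpow x (Suc n) = ncmul x (ncpow x n)"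

definition zet :: "('l, 'b::comm_ring_1) zel \<Rightarrow> ('l, 'b) ncpoly" where
  "zet x = (\<Sum>a\<in>Poly_Mapping.keys x. Poly_Mapping.single [a] (Poly_Mapping.lookup x a))"

definition zmul :: "('l \<Rightarrow> 'l \<Rightarrow> ('l, 'b::comm_ring_1) zel) \<Rightarrow> ('l, 'b) zel \<Rightarrow> ('l, 'b) zel \<Rightarrow> ('l, 'b) zel" where
  "zmul c x y = (\<Sum>a\<in>Poly_Mapping.keys x. \<Sum>b\<in>Poly_Mapping.keys y. scale (Poly_Mapping.lookup x a * Poly_Mapping.lookup y b) (c a b))"

fun circw :: "('l \<Rightarrow> 'l \<Rightarrow> ('l, 'b::comm_ring_1) zel) \<Rightarrow> 'l \<Rightarrow> 'l list \<Rightarrow> ('l, 'b) ncpoly" where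
  "circw c a [] = 0"
| "circw c a (b # w) = ncmul (zet (c a b)) (Poly_Mapping.single w 1)"

definition circ_act :: "('l \<Rightarrow> 'l \<Rightarrow> ('l, 'b::comm_ring_1) zel) \<Rightarrow> ('l, 'b) zel \<Rightarrow> ('l, 'b) ncpoly \<Rightarrow> ('l, 'b) ncpoly" where
  "circ_act c x p = (\<Sum>a\<in>Poly_Mapping.keys x. \<Sum>w\<in>Poly_Mapping.keys p. scale (Poly_Mapping.lookup x a * Poly_Mapping.lookup p w) (circw c a w))"

function hw :: "('l \<Rightarrow> 'l \<Rightarrow> ('l, 'b::comm_ring_1) zel) \<Rightarrow> 'l list \<Rightarrow> 'l list \<Rightarrow> ('l, 'b) ncpoly" where
  "hw c [] w = Poly_Mapping.single w 1"
| "hw c (a # v) [] = Poly_Mapping.single (a # v) 1"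
| "hw c (a # v) (b # w) =
     ncmul (Poly_Mapping.single [a] 1) (hw c v (b # w))
   + ncmul (Poly_Mapping.single [b] 1) (hw c (a # v) w)
   + ncmul (zet (c a b)) (hw c v w)"
  by pat_completeness auto
termination by (relation "measure (\<lambda>(c, v, w). length v + length w)") auto

definition harm :: "('l \<Rightarrow> 'l \<Rightarrow> ('l, 'b::comm_ring_1) zel) \<Rightarrow> ('l, 'b) ncpoly \<Rightarrow> ('l, 'b) ncpoly \<Rightarrow> ('l, 'b) ncpoly" where
  "harm c p q = (\<Sum>v\<in>Poly_Mapping.keys p. \<Sum>w\<in>Poly_Mapping.keys q. scale (Poly_Mapping.lookup p v * Poly_Mapping.lookup q w) (hw c v w))"

primrec Sw :: "('l \<Rightarrow> 'l \<Rightarrow> ('l, 'b::comm_ring_1) zel) \<Rightarrow> 'b \<Rightarrow> 'l list \<Rightarrow> ('l, 'b) ncpoly" where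
  "Sw c r [] = Poly_Mapping.single [] 1"
| "Sw c r (a # w) = ncmul (Poly_Mapping.single [a] 1) (Sw c r w)
                    + scale r (circ_act c (Poly_Mapping.single a 1) (Sw c r w))"

definition Sr :: "('l \<Rightarrow> 'l \<Rightarrow> ('l, 'b::comm_ring_1) zel) \<Rightarrow> 'b \<Rightarrow> ('l, 'b) ncpoly \<Rightarrow> ('l, 'b) ncpoly" where
  "Sr c r p = (\<Sum>w\<in>Poly_Mapping.keys p. scale (Poly_Mapping.lookup p w) (Sw c r w))"

definition liftc :: "('k \<Rightarrow>\<^sub>0 'a::comm_ring_1) \<Rightarrow> ('k \<Rightarrow>\<^sub>0 'a poly)" where
  "liftc x = Poly_Mapping.map (\<lambda>v. [:v:]) x"

end

theory Submission
  imports Defs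
begin


abbreviation lk where "lk \<equiv> Poly_Mapping.lookup"
abbreviation ky where "ky \<equiv> Poly_Mapping.keys"
abbreviation sg where "sg \<equiv> Poly_Mapping.single"


definition addf :: "('x::ab_group_add \<Rightarrow> 'y::ab_group_add) \<Rightarrow> bool" where
  "addf f \<longleftrightarrow> (\<forall>x y. f (x + y) = f x + f y)"

lemma addfD: "addf f \<Longrightarrow> f (x + y) = f x + f y" by (simp add: addf_def)
lemma addf_zero: "addf f \<Longrightarrow> f 0 = 0"
proof -
  assume a: "addf f"
  have "f 0 = f 0 + f 0" using addfD[OF a, of 0 0] by simp
  then show ?thesis by simp
qed
lemma addf_sum:
  assumes a: "addf f" shows "f (sum g A) = (\<Sum>a\<in>A. f (g a))"
proof (induction A rule: infinite_finite_induct)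
  case (insert x F)
  then show ?case using addfD[OF a, of "g x" "sum g F"] by simp
qed (auto simp: addf_zero[OF a])
lemma addf_uminus: "addf f \<Longrightarrow> f (- x) = - f x"
proof -
  assume a: "addf f"
  have "f (- x) + f x = f (- x + x)" using addfD[OF a, of "- x" x] by simp
  also have "\<dots> = 0" using addf_zero[OF a] by simp
  finally show ?thesis by (simp add: eq_neg_iff_add_eq_0)
qed
lemma addf_diff: "addf f \<Longrightarrow> f (x - y) = f x - f y"
proof -
  assume a: "addf f"
  have "f (x - y) = f (x + - y)" by simp
  also have "\<dots> = f x + - f y" using addfD[OF a, of x "- y"] addf_uminus[OF a, of y] by (simp only:)
  finally show ?thesis by simp
qed

definition ks :: "('k \<Rightarrow> 'b::zero \<Rightarrow> 'm::comm_monoid_add) \<Rightarrow> ('k \<Rightarrow>\<^sub>0 'b) \<Rightarrow> 'm" where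
  "ks F p = (\<Sum>k\<in>ky p. F k (lk p k))"

lemma ks_superset:
  assumes "finite S" "ky p \<subseteq> S" "\<And>k. F k 0 = 0"
  shows "ks F p = (\<Sum>k\<in>S. F k (lk p k))"
  unfolding ks_def
  by (rule sum.mono_neutral_left) (use assms in \<open>auto simp: in_keys_iff\<close>)

lemma ks_add:
  fixes F :: "'k \<Rightarrow> 'b::ab_group_add \<Rightarrow> 'm::ab_group_add"
  assumes "\<And>k x y. F k (x + y) = F k x + F k y"
  shows "ks F (p + q) = ks F p + ks F q"
proof -
  have z: "\<And>k. F k 0 = 0" by (metis add_cancel_right_right assms add_0)
  let ?S = "ky p \<union> ky q"
  have "ky (p+q) \<subseteq> ?S" by (simp add: keys_add)
  then show ?thesis
    by (simp add: ks_superset[where S="?S"] z lookup_add assms sum.distrib)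
qed

lemma ks_single:
  assumes "F k 0 = 0"
  shows "ks F (sg k v) = F k v"
  using assms by (cases "v = 0") (auto simp: ks_def)

lemma ks_addf:
  fixes F :: "'k \<Rightarrow> 'b::ab_group_add \<Rightarrow> 'm::ab_group_add"
  assumes "\<And>k x y. F k (x + y) = F k x + F k y"
  shows "addf (ks F)"
  unfolding addf_def by (intro allI ks_add assms)

lemma pm_decomp: "p = (\<Sum>k\<in>ky p. sg k (lk p k))"
proof (rule poly_mapping_eqI)
  fix x
  show "lk p x = lk (\<Sum>k\<in>ky p. sg k (lk p k)) x"
  proof -
    have "lk (\<Sum>k\<in>ky p. sg k (lk p k)) x = (\<Sum>k\<in>ky p. if k = x then lk p k else 0)"
      unfolding lookup_sum by (intro sum.cong refl) (simp add: lookup_single when_def eq_commute)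
    also have "\<dots> = (if x \<in> ky p then lk p x else 0)"
      by (simp add: sum.delta)
    also have "\<dots> = lk p x" by (simp add: not_in_keys_iff_lookup_eq_zero)
    finally show ?thesis by simp
  qed
qed

lemma addf_expand: "addf f \<Longrightarrow> f p = (\<Sum>k\<in>ky p. f (sg k (lk p k)))"
  by (subst pm_decomp) (simp add: addf_sum)

lemma addf_eqI:
  assumes "addf f" "addf g" "\<And>k v. f (sg k v) = g (sg k v)"
  shows "f p = g p"
  by (subst addf_expand[OF assms(1)], subst addf_expand[OF assms(2)]) (simp add: assms(3))

lemma lookup_scale [simp]: "lk (scale k p) x = k * lk p x"
  unfolding scale_def by (simp add: map.rep_eq when_def)

lemma scale_add_right: "scale k (p + q) = scale k p + scale k q"
  by (rule poly_mapping_eqI) (simp add: lookup_add algebra_simps)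
lemma scale_add_left: "scale (k + l) p = scale k p + scale l p"
  by (rule poly_mapping_eqI) (simp add: lookup_add algebra_simps)
lemma scale_scale [simp]: "scale k (scale l p) = scale (k * l) p"
  by (rule poly_mapping_eqI) (simp add: algebra_simps)
lemma scale_one [simp]: "scale 1 p = p"
  by (rule poly_mapping_eqI) simp
lemma scale_zero_left [simp]: "scale 0 p = 0"
  by (rule poly_mapping_eqI) simp
lemma scale_zero_right [simp]: "scale k 0 = 0"
  by (rule poly_mapping_eqI) simp
lemma scale_single [simp]: "scale k (sg w v) = sg w (k * v)"
  by (rule poly_mapping_eqI) (simp add: lookup_single when_def)
lemma addf_scale: "addf (scale k)" by (simp add: addf_def scale_add_right)
lemma scale_sum: "scale k (sum g A) = (\<Sum>a\<in>A. scale k (g a))"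
  by (rule addf_sum[OF addf_scale])
lemma scale_sum_left: "scale (sum g A) p = (\<Sum>a\<in>A. scale (g a) p)"
  by (rule poly_mapping_eqI) (simp add: lookup_sum sum_distrib_right)
lemma scale_uminus_left: "scale (- k) p = - scale k p"
  by (rule poly_mapping_eqI) simp
lemma scale_uminus_right: "scale k (- p) = - scale k p"
  by (rule poly_mapping_eqI) simp
lemma scale_diff_right: "scale k (p - q) = scale k p - scale k q"
  by (rule poly_mapping_eqI) (simp add: lookup_minus algebra_simps)


lemma addf_id: "addf (\<lambda>x. x)" by (simp add: addf_def)
lemma addf_add:
  assumes "addf f" "addf g" shows "addf (\<lambda>x. f x + g x)"
  unfolding addf_def
proof (intro allI)
  fix x y
  show "f (x + y) + g (x + y) = f x + g x + (f y + g y)"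
    using addfD[OF assms(1), of x y] addfD[OF assms(2), of x y] by (simp add: algebra_simps)
qed
lemma addf_sumf:
  assumes "\<And>i. i \<in> A \<Longrightarrow> addf (f i)" shows "addf (\<lambda>x. \<Sum>i\<in>A. f i x)"
  unfolding addf_def
proof (intro allI)
  fix x y
  have "(\<Sum>i\<in>A. f i (x + y)) = (\<Sum>i\<in>A. f i x + f i y)"
    by (rule sum.cong[OF refl]) (rule addfD[OF assms])
  then show "(\<Sum>i\<in>A. f i (x + y)) = (\<Sum>i\<in>A. f i x) + (\<Sum>i\<in>A. f i y)"
    by (simp add: sum.distrib)
qed
lemma addf_comp:
  assumes "addf f" "addf g" shows "addf (\<lambda>x. f (g x))"
  unfolding addf_def
proof (intro allI)
  fix x y
  show "f (g (x + y)) = f (g x) + f (g y)"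
    using addfD[OF assms(2), of x y] addfD[OF assms(1), of "g x" "g y"] by simp
qed

definition bls :: "('k \<Rightarrow> 'm \<Rightarrow> ('n \<Rightarrow>\<^sub>0 'b::comm_ring_1)) \<Rightarrow> ('k \<Rightarrow>\<^sub>0 'b) \<Rightarrow> ('m \<Rightarrow>\<^sub>0 'b) \<Rightarrow> ('n \<Rightarrow>\<^sub>0 'b)" where
  "bls G x y = (\<Sum>a\<in>ky x. \<Sum>b\<in>ky y. scale (lk x a * lk y b) (G a b))"

definition ls :: "('k \<Rightarrow> ('n \<Rightarrow>\<^sub>0 'b::comm_ring_1)) \<Rightarrow> ('k \<Rightarrow>\<^sub>0 'b) \<Rightarrow> ('n \<Rightarrow>\<^sub>0 'b)" where
  "ls G x = (\<Sum>a\<in>ky x. scale (lk x a) (G a))"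

lemma bls_ks_left: "bls G x y = ks (\<lambda>a v. \<Sum>b\<in>ky y. scale (v * lk y b) (G a b)) x"
  by (simp add: bls_def ks_def)
lemma bls_ks_right: "bls G x y = (\<Sum>a\<in>ky x. ks (\<lambda>b v. scale (lk x a * v) (G a b)) y)"
  by (simp add: bls_def ks_def)
lemma ls_ks: "ls G x = ks (\<lambda>a v. scale v (G a)) x"
  by (simp add: ls_def ks_def)

lemma addf_bls_left: "addf (\<lambda>x. bls G x y)"
  unfolding bls_ks_left
  by (rule ks_addf) (simp add: distrib_right scale_add_left sum.distrib)
lemma addf_bls_right: "addf (bls G x)"
  unfolding bls_ks_right
  by (intro addf_sumf ks_addf) (simp add: distrib_left scale_add_left)
lemma addf_ls: "addf (ls G)"
  unfolding ls_ks by (rule ks_addf) (simp add: scale_add_left)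

lemma bls_single: "bls G (sg a \<alpha>) (sg b \<beta>) = scale (\<alpha> * \<beta>) (G a b)"
  unfolding bls_ks_left
  by (subst ks_single) (simp_all add: ks_single)
lemma ls_single: "ls G (sg a \<alpha>) = scale \<alpha> (G a)"
  unfolding ls_ks by (subst ks_single) simp_all

lemma bls_scale_left: "bls G (scale k x) y = scale k (bls G x y)"
proof -
  have "addf (\<lambda>x. bls G (scale k x) y)" by (rule addf_comp[OF addf_bls_left addf_scale])
  moreover have "addf (\<lambda>x. scale k (bls G x y))" by (rule addf_comp[OF addf_scale addf_bls_left])
  ultimately show ?thesis
    by (rule addf_eqI[where f="\<lambda>x. bls G (scale k x) y"], unfold scale_single)
       (rule addf_eqI[where f="\<lambda>y. bls G (sg _ _) y", OF addf_bls_right], 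
        rule addf_comp[OF addf_scale addf_bls_right], simp add: bls_single mult.assoc)
qed

lemma bls_scale_right: "bls G x (scale k y) = scale k (bls G x y)"
proof -
  have "addf (\<lambda>y. bls G x (scale k y))" by (rule addf_comp[OF addf_bls_right addf_scale])
  moreover have "addf (\<lambda>y. scale k (bls G x y))" by (rule addf_comp[OF addf_scale addf_bls_right])
  ultimately show ?thesis
    by (rule addf_eqI[where f="\<lambda>y. bls G x (scale k y)"], unfold scale_single)
       (rule addf_eqI[where f="\<lambda>x. bls G x (sg _ _)", OF addf_bls_left], 
        rule addf_comp[OF addf_scale addf_bls_left], simp add: bls_single mult_ac)
qed

lemma ls_scale: "ls G (scale k x) = scale k (ls G x)"
  by (rule addf_eqI[OF addf_comp[OF addf_ls addf_scale] addf_comp[OF addf_scale addf_ls]])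
     (simp add: ls_single)

lemma ncmul_bls: "ncmul p q = bls (\<lambda>v w. sg (v @ w) 1) p q"
  unfolding ncmul_def bls_def by simp
lemma zet_ls: "zet x = ls (\<lambda>a. sg [a] 1) x"
  unfolding zet_def ls_def by simp
lemma zmul_bls: "zmul c x y = bls c x y"
  unfolding zmul_def bls_def by simp
lemma circ_act_bls: "circ_act c x p = bls (circw c) x p"
  unfolding circ_act_def bls_def by simp
lemma harm_bls: "harm c p q = bls (hw c) p q"
  unfolding harm_def bls_def by simp
lemma Sr_ls: "Sr c r p = ls (Sw c r) p"
  unfolding Sr_def ls_def by simp



lemma bilin_eqI:
  assumes "\<And>y. addf (\<lambda>x. F x y)" "\<And>x. addf (F x)" "\<And>y. addf (\<lambda>x. G x y)" "\<And>x. addf (G x)"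
    and "\<And>a \<alpha> b \<beta>. F (sg a \<alpha>) (sg b \<beta>) = G (sg a \<alpha>) (sg b \<beta>)"
  shows "F x y = G x y"
proof (rule addf_eqI[where f="\<lambda>x. F x y" and g="\<lambda>x. G x y", OF assms(1) assms(3)])
  fix a \<alpha> show "F (sg a \<alpha>) y = G (sg a \<alpha>) y"
    by (rule addf_eqI[OF assms(2) assms(4)]) (rule assms(5))
qed

lemma ncmul_single: "ncmul (sg v a) (sg w b) = sg (v @ w) (a * b)"
  by (simp add: ncmul_bls bls_single)
lemma zet_single: "zet (sg a \<alpha>) = sg [a] \<alpha>"
  by (simp add: zet_ls ls_single)
lemma zmul_single: "zmul c (sg a \<alpha>) (sg b \<beta>) = scale (\<alpha> * \<beta>) (c a b)"
  by (simp add: zmul_bls bls_single)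
lemma circ_act_single: "circ_act c (sg a \<alpha>) (sg w \<beta>) = scale (\<alpha> * \<beta>) (circw c a w)"
  by (simp add: circ_act_bls bls_single)
lemma harm_single: "harm c (sg v \<alpha>) (sg w \<beta>) = scale (\<alpha> * \<beta>) (hw c v w)"
  by (simp add: harm_bls bls_single)
lemma Sr_single: "Sr c r (sg w \<alpha>) = scale \<alpha> (Sw c r w)"
  by (simp add: Sr_ls ls_single)

lemma ncmul_scale_left: "ncmul (scale k p) q = scale k (ncmul p q)"
  by (simp add: ncmul_bls bls_scale_left)
lemma ncmul_scale_right: "ncmul p (scale k q) = scale k (ncmul p q)"
  by (simp add: ncmul_bls bls_scale_right)
lemma zet_scale: "zet (scale k x) = scale k (zet x)"
  by (simp add: zet_ls ls_scale)
lemma zmul_scale_left: "zmul c (scale k x) y = scale k (zmul c x y)"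
  by (simp add: zmul_bls bls_scale_left)
lemma zmul_scale_right: "zmul c x (scale k y) = scale k (zmul c x y)"
  by (simp add: zmul_bls bls_scale_right)
lemma circ_act_scale_left: "circ_act c (scale k x) y = scale k (circ_act c x y)"
  by (simp add: circ_act_bls bls_scale_left)
lemma circ_act_scale_right: "circ_act c x (scale k y) = scale k (circ_act c x y)"
  by (simp add: circ_act_bls bls_scale_right)
lemma harm_scale_left: "harm c (scale k x) y = scale k (harm c x y)"
  by (simp add: harm_bls bls_scale_left)
lemma harm_scale_right: "harm c x (scale k y) = scale k (harm c x y)"
  by (simp add: harm_bls bls_scale_right)
lemma Sr_scale: "Sr c r (scale k x) = scale k (Sr c r x)"
  by (simp add: Sr_ls ls_scale)

lemma addf_ncmul_left: "addf g \<Longrightarrow> addf (\<lambda>x. ncmul (g x) q)"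
  unfolding ncmul_bls by (rule addf_comp[OF addf_bls_left])
lemma addf_ncmul_right: "addf g \<Longrightarrow> addf (\<lambda>x. ncmul p (g x))"
  unfolding ncmul_bls by (rule addf_comp[OF addf_bls_right])
lemma addf_zet: "addf g \<Longrightarrow> addf (\<lambda>x. zet (g x))"
  unfolding zet_ls by (rule addf_comp[OF addf_ls])
lemma addf_zmul_left: "addf g \<Longrightarrow> addf (\<lambda>x. zmul c (g x) q)"
  unfolding zmul_bls by (rule addf_comp[OF addf_bls_left])
lemma addf_zmul_right: "addf g \<Longrightarrow> addf (\<lambda>x. zmul c p (g x))"
  unfolding zmul_bls by (rule addf_comp[OF addf_bls_right])
lemma addf_circ_act_left: "addf g \<Longrightarrow> addf (\<lambda>x. circ_act c (g x) q)"
  unfolding circ_act_bls by (rule addf_comp[OF addf_bls_left])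
lemma addf_circ_act_right: "addf g \<Longrightarrow> addf (\<lambda>x. circ_act c p (g x))"
  unfolding circ_act_bls by (rule addf_comp[OF addf_bls_right])
lemma addf_harm_left: "addf g \<Longrightarrow> addf (\<lambda>x. harm c (g x) q)"
  unfolding harm_bls by (rule addf_comp[OF addf_bls_left])
lemma addf_harm_right: "addf g \<Longrightarrow> addf (\<lambda>x. harm c p (g x))"
  unfolding harm_bls by (rule addf_comp[OF addf_bls_right])
lemma addf_Sr: "addf g \<Longrightarrow> addf (\<lambda>x. Sr c r (g x))"
  unfolding Sr_ls by (rule addf_comp[OF addf_ls])
lemma addf_scale_comp: "addf g \<Longrightarrow> addf (\<lambda>x. scale k (g x))"
  by (rule addf_comp[OF addf_scale])

lemmas addf_I = addf_id addf_add addf_ncmul_left addf_ncmul_right addf_zet addf_zmul_left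
  addf_zmul_right addf_circ_act_left addf_circ_act_right addf_harm_left addf_harm_right addf_Sr addf_scale_comp


abbreviation one :: "('l, 'b::comm_ring_1) ncpoly" where "one \<equiv> sg [] 1"

lemma ncmul_assoc: "ncmul (ncmul p q) s = ncmul p (ncmul q s)"
proof (rule bilin_eqI[where F="\<lambda>p q. ncmul (ncmul p q) s" and G = "\<lambda>p q. ncmul p (ncmul q s)"])
  fix a \<alpha> b \<beta>
  show "ncmul (ncmul (sg a \<alpha>) (sg b \<beta>)) s = ncmul (sg a \<alpha>) (ncmul (sg b \<beta>) s)"
    by (rule addf_eqI[where f="\<lambda>s. ncmul (ncmul (sg a \<alpha>) (sg b \<beta>)) s" and g="\<lambda>s. ncmul (sg a \<alpha>) (ncmul (sg b \<beta>) s)"])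
       (intro addf_I, intro addf_I, simp add: ncmul_single mult.assoc)
qed (intro addf_I)+

lemma ncmul_one_left: "ncmul one q = q"
  by (rule addf_eqI[where f="\<lambda>q. ncmul one q" and g="\<lambda>q. q"]) (intro addf_I, intro addf_I, simp add: ncmul_single)
lemma ncmul_one_right: "ncmul p one = p"
  by (rule addf_eqI[where f="\<lambda>q. ncmul q one" and g="\<lambda>q. q"]) (intro addf_I, intro addf_I, simp add: ncmul_single)

lemma harm_one_left: "harm c one q = q"
  by (rule addf_eqI[where f="\<lambda>q. harm c one q" and g="\<lambda>q. q"]) (intro addf_I, intro addf_I, simp add: harm_single)
lemma hw_Nil_right: "hw c v [] = sg v 1"
  by (cases v) simp_all
lemma harm_one_right: "harm c p one = p"
  by (rule addf_eqI[where f="\<lambda>q. harm c q one" and g="\<lambda>q. q"]) (intro addf_I, intro addf_I, simp add: harm_single hw_Nil_right)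

lemma circ_act_one: "circ_act c x one = 0"
  by (rule addf_eqI[where f="\<lambda>x. circ_act c x one" and g="\<lambda>x. 0"]) (intro addf_I, simp add: addf_def, simp add: circ_act_single)

lemma Sr_one: "Sr c r one = one"
  by (simp add: Sr_single)

lemma ncmul_zet_single: "ncmul (zet (sg a \<alpha>)) (sg w \<beta>) = sg (a # w) (\<alpha> * \<beta>)"
  by (simp add: zet_single ncmul_single)

lemma ncmul_sg_right: "v \<noteq> 1 \<Longrightarrow> ncmul p (sg k v) = scale v (ncmul p (sg k 1))"
proof -
  have "sg k v = scale v (sg k 1)" by simp
  then show ?thesis by (metis ncmul_scale_right)
qed

lemma circ_act_zet: "circ_act c x (ncmul (zet y) W) = ncmul (zet (zmul c x y)) W"
proof (rule bilin_eqI[where F="\<lambda>x y. circ_act c x (ncmul (zet y) W)" and G = "\<lambda>x y. ncmul (zet (zmul c x y)) W"])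
  fix a \<alpha> b \<beta>
  show "circ_act c (sg a \<alpha>) (ncmul (zet (sg b \<beta>)) W) = ncmul (zet (zmul c (sg a \<alpha>) (sg b \<beta>))) W"
    by (rule addf_eqI[where f="\<lambda>W. circ_act c (sg a \<alpha>) (ncmul (zet (sg b \<beta>)) W)" and g="\<lambda>W. ncmul (zet (zmul c (sg a \<alpha>) (sg b \<beta>))) W"])
       (intro addf_I, intro addf_I, rename_tac k v, case_tac "v = 1", simp_all add: ncmul_zet_single circ_act_single zmul_single zet_scale ncmul_scale_left ncmul_sg_right mult_ac)
qed (intro addf_I)+

lemma Sr_zet: fixes c :: "'l \<Rightarrow> 'l \<Rightarrow> ('l, 'b::comm_ring_1) zel" shows "Sr c r (ncmul (zet x) W) = ncmul (zet x) (Sr c r W) + scale r (circ_act c x (Sr c r W))"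
proof (rule bilin_eqI[where F="\<lambda>x W. Sr c r (ncmul (zet x) W)" and G = "\<lambda>x W. ncmul (zet x) (Sr c r W) + scale r (circ_act c x (Sr c r W))"])
  fix a :: 'l and \<alpha> :: 'b and w :: "'l list" and \<beta> :: 'b
  have e1: "zet (sg a \<alpha>) = scale \<alpha> (sg [a] 1)" by (simp add: zet_single)
  have e2: "sg a \<alpha> = scale \<alpha> (sg a 1)" by simp
  have e3: "ncmul (sg [a] \<alpha>) X = scale \<alpha> (ncmul (sg [a] 1) X)" for X
    using ncmul_scale_left[of \<alpha> "sg [a] 1" X] by simp
  have e4: "circ_act c (sg a \<alpha>) X = scale \<alpha> (circ_act c (sg a 1) X)" for X
    using circ_act_scale_left[of c \<alpha> "sg a 1" X] by simp
  show "Sr c r (ncmul (zet (sg a \<alpha>)) (sg w \<beta>)) = ncmul (zet (sg a \<alpha>)) (Sr c r (sg w \<beta>)) + scale r (circ_act c (sg a \<alpha>) (Sr c r (sg w \<beta>)))"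
    apply (simp add: ncmul_zet_single Sr_single scale_add_right)
    apply (simp only: e1 e3 e4 ncmul_scale_left ncmul_scale_right circ_act_scale_left circ_act_scale_right scale_scale)
    apply (simp add: ncmul_scale_left ncmul_scale_right circ_act_scale_left circ_act_scale_right mult_ac)
    done
qed (intro addf_I)+

lemma harm_zet_zet:
  fixes c :: "'l \<Rightarrow> 'l \<Rightarrow> ('l, 'b::comm_ring_1) zel" shows
  "harm c (ncmul (zet x) U) (ncmul (zet y) V) =
     ncmul (zet x) (harm c U (ncmul (zet y) V)) + ncmul (zet y) (harm c (ncmul (zet x) U) V)
     + ncmul (zet (zmul c x y)) (harm c U V)"
proof (rule bilin_eqI[where F="\<lambda>x U. harm c (ncmul (zet x) U) (ncmul (zet y) V)" and
   G = "\<lambda>x U. ncmul (zet x) (harm c U (ncmul (zet y) V)) + ncmul (zet y) (harm c (ncmul (zet x) U) V)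
     + ncmul (zet (zmul c x y)) (harm c U V)"])
  fix a :: 'l and \<alpha> :: 'b and v :: "'l list" and \<beta> :: 'b
  show "harm c (ncmul (zet (sg a \<alpha>)) (sg v \<beta>)) (ncmul (zet y) V) =
     ncmul (zet (sg a \<alpha>)) (harm c (sg v \<beta>) (ncmul (zet y) V)) + ncmul (zet y) (harm c (ncmul (zet (sg a \<alpha>)) (sg v \<beta>)) V)
     + ncmul (zet (zmul c (sg a \<alpha>) y)) (harm c (sg v \<beta>) V)"
  proof (rule bilin_eqI[where F="\<lambda>y V. harm c (ncmul (zet (sg a \<alpha>)) (sg v \<beta>)) (ncmul (zet y) V)" and
     G = "\<lambda>y V. ncmul (zet (sg a \<alpha>)) (harm c (sg v \<beta>) (ncmul (zet y) V)) + ncmul (zet y) (harm c (ncmul (zet (sg a \<alpha>)) (sg v \<beta>)) V)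
     + ncmul (zet (zmul c (sg a \<alpha>) y)) (harm c (sg v \<beta>) V)"])
    fix b :: 'l and \<gamma> :: 'b and w :: "'l list" and \<delta> :: 'b
    have e1: "\<And>a \<alpha>. zet (sg a \<alpha>) = scale \<alpha> (sg [a] 1)" by (simp add: zet_single)
    show "harm c (ncmul (zet (sg a \<alpha>)) (sg v \<beta>)) (ncmul (zet (sg b \<gamma>)) (sg w \<delta>)) =
     ncmul (zet (sg a \<alpha>)) (harm c (sg v \<beta>) (ncmul (zet (sg b \<gamma>)) (sg w \<delta>))) + ncmul (zet (sg b \<gamma>)) (harm c (ncmul (zet (sg a \<alpha>)) (sg v \<beta>)) (sg w \<delta>))
     + ncmul (zet (zmul c (sg a \<alpha>) (sg b \<gamma>))) (harm c (sg v \<beta>) (sg w \<delta>))"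
      apply (simp only: ncmul_zet_single harm_single hw.simps zmul_single zet_scale)
      apply (simp only: e1 ncmul_scale_left ncmul_scale_right scale_add_right scale_scale)
      apply (simp add: mult_ac)
      done
  qed (intro addf_I)+
qed (intro addf_I)+



lemma tri_swap: fixes n :: nat shows "(\<Sum>j\<le>n. \<Sum>k<n-j. f j k) = (\<Sum>k<n. \<Sum>j<n-k. f j k)"
proof -
  have "(\<Sum>j\<le>n. \<Sum>k<n-j. f j k) = (\<Sum>j\<in>{..n}. \<Sum>k\<in>{k. k \<in> {..<n} \<and> j + k < n}. f j k)"
    by (intro sum.cong refl) auto
  also have "\<dots> = (\<Sum>k\<in>{..<n}. \<Sum>j\<in>{j. j \<in> {..n} \<and> j + k < n}. f j k)"
    by (rule sum.swap_restrict) auto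
  also have "\<dots> = (\<Sum>k<n. \<Sum>j<n-k. f j k)"
    by (intro sum.cong refl) auto
  finally show ?thesis .
qed

lemma sum_atMost_shift0: "(\<Sum>k\<le>n. f k) = f 0 + (\<Sum>k<n. f (Suc k))"
  by (cases n) (simp, simp only: lessThan_Suc_atMost sum.atMost_Suc_shift)

lemma sum_atMost_last: fixes n :: nat shows "(\<Sum>k\<le>n. f k) = (\<Sum>k<n. f k) + f n"
proof -
  have "{..n} = insert n {..<n}" by auto
  then show ?thesis by (simp add: add.commute)
qed

lemma addf_pf: "addf (\<lambda>W. ncmul (zet x) W)" by (intro addf_I)
lemma pf_sum: "ncmul (zet x) (sum g A) = (\<Sum>i\<in>A. ncmul (zet x) (g i))"
  by (rule addf_sum[OF addf_pf])
lemma pf_diff: "ncmul (zet x) (U - V) = ncmul (zet x) U - ncmul (zet x) V"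
  by (rule addf_diff[OF addf_pf])
lemma pf_add: "ncmul (zet x) (U + V) = ncmul (zet x) U + ncmul (zet x) V"
  by (rule addfD[OF addf_pf])
lemma pf_zero: "ncmul (zet x) 0 = 0"
  by (rule addf_zero[OF addf_pf])
lemma pf_scale: "ncmul (zet x) (scale k U) = scale k (ncmul (zet x) U)"
  by (rule ncmul_scale_right)
lemma pf_scale_left: "ncmul (zet (scale k x)) U = scale k (ncmul (zet x) U)"
  by (simp add: zet_scale ncmul_scale_left)
lemma harm_sum_right: "harm c U (sum g A) = (\<Sum>i\<in>A. harm c U (g i))"
  by (rule addf_sum) (intro addf_I)
lemma circ_sum: "circ_act c x (sum g A) = (\<Sum>i\<in>A. circ_act c x (g i))"
  by (rule addf_sum) (intro addf_I)
lemma circ_add: "circ_act c x (U + V) = circ_act c x U + circ_act c x V"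
  by (rule addfD) (intro addf_I)
lemma scale_minus_one_pow: "scale ((-1) ^ Suc j) U = - scale ((-1) ^ j) U"
  by (simp add: scale_uminus_left)

lemma swap_gen:
  fixes n :: nat
  shows "(\<Sum>j\<le>n. scale (co j) (\<Sum>k<n-j. ncmul (zet (y k)) (h j (n - j - Suc k))))
       = (\<Sum>k<n. ncmul (zet (y k)) (\<Sum>j\<le>n - Suc k. scale (co j) (h j (n - Suc k - j))))"
proof -
  have "(\<Sum>j\<le>n. scale (co j) (\<Sum>k<n-j. ncmul (zet (y k)) (h j (n - j - Suc k))))
      = (\<Sum>j\<le>n. \<Sum>k<n-j. scale (co j) (ncmul (zet (y k)) (h j (n - j - Suc k))))"
    by (simp add: scale_sum)
  also have "\<dots> = (\<Sum>k<n. \<Sum>j<n-k. scale (co j) (ncmul (zet (y k)) (h j (n - j - Suc k))))"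
    by (rule tri_swap)
  also have "\<dots> = (\<Sum>k<n. ncmul (zet (y k)) (\<Sum>j\<le>n - Suc k. scale (co j) (h j (n - Suc k - j))))"
  proof (intro sum.cong refl)
    fix k assume "k \<in> {..<n}"
    then have nk: "n - k = Suc (n - Suc k)" by auto
    have e2: "n - j - Suc k = n - Suc k - j" for j by simp
    show "(\<Sum>j<n-k. scale (co j) (ncmul (zet (y k)) (h j (n - j - Suc k))))
        = ncmul (zet (y k)) (\<Sum>j\<le>n - Suc k. scale (co j) (h j (n - Suc k - j)))"
      unfolding nk lessThan_Suc_atMost e2 by (simp add: pf_sum pf_scale)
  qed
  finally show ?thesis .
qed

lemma scale_sum_combine: "(\<Sum>k\<in>A. scale (f k) (X k)) + (\<Sum>k\<in>A. scale (g k) (X k)) = (\<Sum>k\<in>A. scale (f k + g k) (X k))"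
  by (simp add: scale_add_left sum.distrib)

locale P26 =
  fixes c :: "'l \<Rightarrow> 'l \<Rightarrow> ('l, 'b::comm_ring_1) zel" and a1 a2 :: "('l, 'b) zel" and r :: 'b
begin

abbreviation pf :: "('l, 'b) zel \<Rightarrow> ('l, 'b) ncpoly \<Rightarrow> ('l, 'b) ncpoly" where
  "pf x W \<equiv> ncmul (zet x) W"

definition E :: "nat \<Rightarrow> ('l, 'b) ncpoly" where "E n = ncpow (zet a1) n"

primrec K :: "nat \<Rightarrow> ('l, 'b) zel" where
  "K 0 = a1" | "K (Suc k) = zmul c a1 (K k)"

definition B :: "nat \<Rightarrow> ('l, 'b) ncpoly" where "B m = Sr c 1 (E m)"

lemma E_0: "E 0 = one" by (simp add: E_def)
lemma E_Suc: "E (Suc n) = pf a1 (E n)" by (simp add: E_def)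
lemma B_0: "B 0 = one" by (simp add: B_def E_0 Sr_one)

lemma B_Suc0: "B (Suc n) = pf a1 (B n) + circ_act c a1 (B n)"
  by (simp add: B_def E_Suc Sr_zet)

lemma B_rec: "B (Suc n) = (\<Sum>k\<le>n. pf (K k) (B (n - k)))"
proof (induction n)
  case 0
  show ?case by (simp add: B_Suc0 B_0 circ_act_one)
next
  case (Suc n)
  have "circ_act c a1 (B (Suc n)) = (\<Sum>k\<le>n. pf (K (Suc k)) (B (n - k)))"
    by (simp add: Suc circ_sum circ_act_zet)
  then have "B (Suc (Suc n)) = pf (K 0) (B (Suc n)) + (\<Sum>k\<le>n. pf (K (Suc k)) (B (Suc n - Suc k)))"
    by (simp add: B_Suc0[of "Suc n"])
  also have "\<dots> = (\<Sum>k\<le>Suc n. pf (K k) (B (Suc n - k)))"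
    by (subst sum.atMost_Suc_shift) simp
  finally show ?case .
qed

lemma harm_pf_B:
  "harm c (pf x U) (B m) = pf x (harm c U (B m))
     + (\<Sum>k<m. pf (K k) (harm c (pf x U) (B (m - Suc k))))
     + (\<Sum>k<m. pf (zmul c x (K k)) (harm c U (B (m - Suc k))))"
proof (cases m)
  case 0
  then show ?thesis by (simp add: B_0 harm_one_right)
next
  case (Suc n)
  have "harm c (pf x U) (B m) = (\<Sum>k\<le>n. harm c (pf x U) (pf (K k) (B (n - k))))"
    by (simp add: Suc B_rec harm_sum_right)
  also have "\<dots> = (\<Sum>k\<le>n. pf x (harm c U (pf (K k) (B (n - k)))))
     + (\<Sum>k\<le>n. pf (K k) (harm c (pf x U) (B (n - k))))
     + (\<Sum>k\<le>n. pf (zmul c x (K k)) (harm c U (B (n - k))))"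
    by (simp add: harm_zet_zet sum.distrib)
  also have "(\<Sum>k\<le>n. pf x (harm c U (pf (K k) (B (n - k))))) = pf x (harm c U (B m))"
    by (simp add: Suc B_rec harm_sum_right pf_sum)
  finally show ?thesis by (simp add: Suc lessThan_Suc_atMost)
qed

definition Xs :: "nat \<Rightarrow> ('l, 'b) ncpoly" where
  "Xs n = (\<Sum>j\<le>n. scale ((-1) ^ j) (harm c (E j) (B (n - j))))"

lemma Xs_0: "Xs 0 = one"
  by (simp add: Xs_def E_0 B_0 harm_one_left)

lemma Xs_split: "Xs m = B m - (\<Sum>j<m. scale ((-1) ^ j) (harm c (E (Suc j)) (B (m - Suc j))))"
  unfolding Xs_def sum_atMost_shift0
  by (simp add: E_0 harm_one_left scale_uminus_left sum_negf)

lemma Xs_Suc: "Xs (Suc n) = 0"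
proof -
  define S where "S j = harm c (E (Suc j)) (B (n - j))" for j
  have S_exp: "S j = pf a1 (harm c (E j) (B (n - j)))
     + (\<Sum>k<n-j. pf (K k) (harm c (E (Suc j)) (B (n - j - Suc k))))
     + (\<Sum>k<n-j. pf (K (Suc k)) (harm c (E j) (B (n - j - Suc k))))" for j
    unfolding S_def E_Suc K.simps by (rule harm_pf_B)
  have XsS: "Xs (Suc n) = B (Suc n) - (\<Sum>j\<le>n. scale ((-1)^j) (S j))"
    by (simp add: Xs_split[of "Suc n"] S_def lessThan_Suc_atMost)
  have T1: "(\<Sum>j\<le>n. scale ((-1)^j) (pf a1 (harm c (E j) (B (n - j))))) = pf a1 (Xs n)"
    by (simp add: Xs_def pf_sum pf_scale)
  have e: "n - j - Suc k = n - k - Suc j" for j k :: nat by simp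
  have T2: "(\<Sum>j\<le>n. scale ((-1)^j) (\<Sum>k<n-j. pf (K k) (harm c (E (Suc j)) (B (n - j - Suc k)))))
      = (\<Sum>k<n. pf (K k) (B (n - k) - Xs (n - k)))"
  proof -
    have "(\<Sum>j\<le>n. scale ((-1)^j) (\<Sum>k<n-j. pf (K k) (harm c (E (Suc j)) (B (n - j - Suc k)))))
        = (\<Sum>j\<le>n. \<Sum>k<n-j. scale ((-1)^j) (pf (K k) (harm c (E (Suc j)) (B (n - j - Suc k)))))"
      by (simp add: scale_sum)
    also have "\<dots> = (\<Sum>k<n. \<Sum>j<n-k. scale ((-1)^j) (pf (K k) (harm c (E (Suc j)) (B (n - j - Suc k)))))"
      by (rule tri_swap)
    also have "\<dots> = (\<Sum>k<n. pf (K k) (\<Sum>j<n-k. scale ((-1)^j) (harm c (E (Suc j)) (B (n - k - Suc j)))))"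
      by (simp add: pf_sum pf_scale add.commute)
    also have "\<dots> = (\<Sum>k<n. pf (K k) (B (n - k) - Xs (n - k)))"
      by (simp add: Xs_split[of "n - _"])
    finally show ?thesis .
  qed
  have T3: "(\<Sum>j\<le>n. scale ((-1)^j) (\<Sum>k<n-j. pf (K (Suc k)) (harm c (E j) (B (n - j - Suc k)))))
      = (\<Sum>k<n. pf (K (Suc k)) (Xs (n - Suc k)))"
  proof -
    have "(\<Sum>j\<le>n. scale ((-1)^j) (\<Sum>k<n-j. pf (K (Suc k)) (harm c (E j) (B (n - j - Suc k)))))
        = (\<Sum>j\<le>n. \<Sum>k<n-j. scale ((-1)^j) (pf (K (Suc k)) (harm c (E j) (B (n - j - Suc k)))))"
      by (simp add: scale_sum)
    also have "\<dots> = (\<Sum>k<n. \<Sum>j<n-k. scale ((-1)^j) (pf (K (Suc k)) (harm c (E j) (B (n - j - Suc k)))))"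
      by (rule tri_swap)
    also have "\<dots> = (\<Sum>k<n. pf (K (Suc k)) (Xs (n - Suc k)))"
    proof (intro sum.cong refl)
      fix k assume "k \<in> {..<n}"
      then have nk: "n - k = Suc (n - Suc k)" by auto
      have e2: "n - j - Suc k = n - Suc k - j" for j by simp
      show "(\<Sum>j<n-k. scale ((-1)^j) (pf (K (Suc k)) (harm c (E j) (B (n - j - Suc k)))))
          = pf (K (Suc k)) (Xs (n - Suc k))"
        unfolding nk lessThan_Suc_atMost Xs_def by (simp add: pf_sum pf_scale add.commute)
    qed
    finally show ?thesis .
  qed
  have Bs: "B (Suc n) = (\<Sum>k<n. pf (K k) (B (n - k))) + pf (K n) one"
    by (simp add: B_rec sum_atMost_last B_0)
  have Xsh: "(\<Sum>k<n. pf (K k) (Xs (n - k))) + pf (K n) one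
      = pf a1 (Xs n) + (\<Sum>k<n. pf (K (Suc k)) (Xs (n - Suc k)))"
  proof -
    have "(\<Sum>k<n. pf (K k) (Xs (n - k))) + pf (K n) one = (\<Sum>k\<le>n. pf (K k) (Xs (n - k)))"
      by (simp add: sum_atMost_last Xs_0)
    also have "\<dots> = pf a1 (Xs n) + (\<Sum>k<n. pf (K (Suc k)) (Xs (n - Suc k)))"
      by (simp add: sum_atMost_shift0)
    finally show ?thesis .
  qed
  have "(\<Sum>j\<le>n. scale ((-1)^j) (S j)) = pf a1 (Xs n) + (\<Sum>k<n. pf (K k) (B (n - k) - Xs (n - k)))
      + (\<Sum>k<n. pf (K (Suc k)) (Xs (n - Suc k)))"
    unfolding S_exp scale_add_right sum.distrib T1 T2 T3 by simp
  then have "Xs (Suc n) = (\<Sum>k<n. pf (K k) (B (n - k))) + pf (K n) one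
     - (pf a1 (Xs n) + (\<Sum>k<n. pf (K k) (B (n - k))) - (\<Sum>k<n. pf (K k) (Xs (n - k)))
        + (\<Sum>k<n. pf (K (Suc k)) (Xs (n - Suc k))))"
    by (simp add: XsS Bs pf_diff sum_subtractf)
  also have "\<dots> = ((\<Sum>k<n. pf (K k) (Xs (n - k))) + pf (K n) one)
      - (pf a1 (Xs n) + (\<Sum>k<n. pf (K (Suc k)) (Xs (n - Suc k))))"
    by (simp add: algebra_simps)
  also have "\<dots> = 0" by (simp add: Xsh)
  finally show ?thesis .
qed

lemma Xs_eq: "Xs m = (if m = 0 then one else 0)"
  by (cases m) (simp_all add: Xs_0 Xs_Suc)

definition Phi :: "nat \<Rightarrow> ('l, 'b) ncpoly \<Rightarrow> ('l, 'b) ncpoly" where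
  "Phi n U = (\<Sum>j\<le>n. scale ((-1) ^ j) (harm c (ncmul U (E j)) (B (n - j))))"

lemma Phi_one: "Phi n one = Xs n"
  by (simp add: Phi_def Xs_def ncmul_one_left)

lemma Phi_pf: "Phi n (pf x U) = pf x (Phi n U)
   + (\<Sum>k<n. pf (K k) (Phi (n - Suc k) (pf x U)))
   + (\<Sum>k<n. pf (zmul c x (K k)) (Phi (n - Suc k) U))"
proof -
  have ex: "harm c (ncmul (pf x U) (E j)) (B m) = pf x (harm c (ncmul U (E j)) (B m))
     + (\<Sum>k<m. pf (K k) (harm c (ncmul (pf x U) (E j)) (B (m - Suc k))))
     + (\<Sum>k<m. pf (zmul c x (K k)) (harm c (ncmul U (E j)) (B (m - Suc k))))" for j m
    using harm_pf_B[of x "ncmul U (E j)" m] by (simp add: ncmul_assoc)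
  have "Phi n (pf x U) = (\<Sum>j\<le>n. scale ((-1) ^ j) (pf x (harm c (ncmul U (E j)) (B (n - j)))))
     + (\<Sum>j\<le>n. scale ((-1) ^ j) (\<Sum>k<n-j. pf (K k) (harm c (ncmul (pf x U) (E j)) (B (n - j - Suc k)))))
     + (\<Sum>j\<le>n. scale ((-1) ^ j) (\<Sum>k<n-j. pf (zmul c x (K k)) (harm c (ncmul U (E j)) (B (n - j - Suc k)))))"
  proof -
    have "Phi n (pf x U) = (\<Sum>j\<le>n. scale ((-1) ^ j) (pf x (harm c (ncmul U (E j)) (B (n - j)))
     + (\<Sum>k<n-j. pf (K k) (harm c (ncmul (pf x U) (E j)) (B (n - j - Suc k))))
     + (\<Sum>k<n-j. pf (zmul c x (K k)) (harm c (ncmul U (E j)) (B (n - j - Suc k))))))"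
      unfolding Phi_def by (rule sum.cong[OF refl]) (subst ex, rule refl)
    then show ?thesis by (simp only: scale_add_right sum.distrib)
  qed
  also have "\<dots> = pf x (Phi n U)
   + (\<Sum>k<n. pf (K k) (Phi (n - Suc k) (pf x U)))
   + (\<Sum>k<n. pf (zmul c x (K k)) (Phi (n - Suc k) U))"
    unfolding swap_gen[where h="\<lambda>j m. harm c (ncmul (pf x U) (E j)) (B m)"]
      swap_gen[where h="\<lambda>j m. harm c (ncmul U (E j)) (B m)"]
    by (simp add: Phi_def pf_sum pf_scale)
  finally show ?thesis .
qed

definition U :: "nat \<Rightarrow> ('l, 'b) ncpoly" where "U i = ncmul (E i) (zet a2)"

lemma U_0: "U 0 = pf a2 one" by (simp add: U_def E_0 ncmul_one_left ncmul_one_right)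
lemma U_Suc: "U (Suc i) = pf a1 (U i)" by (simp add: U_def E_Suc ncmul_assoc)

definition Y :: "nat \<Rightarrow> nat \<Rightarrow> ('l, 'b) ncpoly" where "Y i n = Phi n (U i)"

definition Lz :: "nat \<Rightarrow> ('l, 'b) ncpoly" where
  "Lz n = (if n = 0 then pf a2 one else pf (zmul c a2 (K (n - 1))) one)"

definition D :: "nat \<Rightarrow> nat \<Rightarrow> ('l, 'b) ncpoly" where
  "D i n = (if i = 0 then Lz n else pf a1 (Y (i - 1) n) + (\<Sum>k<n. pf (K (Suc k)) (Y (i - 1) (n - Suc k))))"

lemma Y_rec: "Y i n = D i n + (\<Sum>k<n. pf (K k) (Y i (n - Suc k)))"
proof (cases i)
  case 0
  have s: "(\<Sum>k<n. pf (zmul c a2 (K k)) (Xs (n - Suc k))) = (if n = 0 then 0 else pf (zmul c a2 (K (n - 1))) one)"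
  proof (cases n)
    case (Suc m)
    have "(\<Sum>k<m. pf (zmul c a2 (K k)) (Xs (Suc m - Suc k))) = 0"
      by (intro sum.neutral) (auto simp: Xs_eq pf_zero)
    then show ?thesis by (simp add: Suc Xs_eq)
  qed simp
  show ?thesis using Phi_pf[of n a2 one] s
    by (simp add: 0 Y_def D_def Lz_def U_0 Phi_one Xs_eq pf_zero)
next
  case (Suc i')
  show ?thesis using Phi_pf[of n a1 "U i'"]
    by (simp add: Suc Y_def D_def U_Suc)
qed

definition w :: "nat \<Rightarrow> nat \<Rightarrow> 'b" where "w q i = (1 - r) ^ i * r ^ (q - i)"
definition G :: "nat \<Rightarrow> ('l, 'b) ncpoly" where "G p = (\<Sum>i\<le>p. scale (w p i) (Y i (p - i)))"
definition L :: "nat \<Rightarrow> ('l, 'b) ncpoly" where "L p = scale (r ^ p) (Lz p)"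
definition M :: "nat \<Rightarrow> ('l, 'b) zel" where "M k = scale (r ^ k) (K k)"

lemma w_Suc_Suc: "w (Suc q) (Suc i) = (1 - r) * w q i"
  by (simp add: w_def)
lemma w_shift: "i \<le> p - Suc k \<Longrightarrow> k < p \<Longrightarrow> w p i = r ^ Suc k * w (p - Suc k) i"
proof -
  assume "i \<le> p - Suc k" "k < p"
  then have "p - i = Suc k + (p - Suc k - i)" by simp
  then have "r ^ (p - i) = r ^ Suc k * r ^ (p - Suc k - i)" by (metis power_add)
  then show ?thesis by (simp only: w_def mult_ac)
qed

lemma inner_G: "k < p \<Longrightarrow> (\<Sum>i\<le>p - Suc k. scale (w p i) (Y i (p - Suc k - i))) = scale (r ^ Suc k) (G (p - Suc k))"
  unfolding G_def scale_sum by (intro sum.cong refl) (simp add: w_shift)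

lemma G_part2: "(\<Sum>i\<le>p. scale (w p i) (\<Sum>k<p-i. pf (y k) (Y i (p - i - Suc k))))
   = (\<Sum>k<p. scale (r ^ Suc k) (pf (y k) (G (p - Suc k))))"
  unfolding swap_gen[where h="\<lambda>i m. Y i m"]
proof (intro sum.cong refl)
  fix k assume "k \<in> {..<p}"
  then have "k < p" by simp
  then show "pf (y k) (\<Sum>i\<le>p - Suc k. scale (w p i) (Y i (p - Suc k - i))) = scale (r ^ Suc k) (pf (y k) (G (p - Suc k)))"
    by (simp only: inner_G pf_scale)
qed

lemma G_rec: "G p = L p + (\<Sum>k<p. pf (M k) (G (p - Suc k)))"
proof -
  have G1: "G p = (\<Sum>i\<le>p. scale (w p i) (D i (p - i)))
     + (\<Sum>i\<le>p. scale (w p i) (\<Sum>k<p-i. pf (K k) (Y i (p - i - Suc k))))"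
  proof -
    have "G p = (\<Sum>i\<le>p. scale (w p i) (D i (p - i) + (\<Sum>k<p-i. pf (K k) (Y i (p - i - Suc k)))))"
      unfolding G_def by (rule sum.cong[OF refl]) (subst Y_rec, rule refl)
    then show ?thesis by (simp only: scale_add_right sum.distrib)
  qed
  show ?thesis
  proof (cases p)
    case 0
    have "Y 0 0 = Lz 0" by (subst Y_rec) (simp add: D_def)
    with 0 show ?thesis by (simp add: G_def L_def w_def)
  next
    case (Suc q)
    have P1: "(\<Sum>i\<le>p. scale (w p i) (D i (p - i))) = L p + scale (1 - r) (pf a1 (G q))
       + scale (1 - r) (\<Sum>k<q. scale (r ^ Suc k) (pf (K (Suc k)) (G (q - Suc k))))"
    proof -
      have "(\<Sum>i\<le>p. scale (w p i) (D i (p - i))) = scale (w p 0) (D 0 p) + (\<Sum>i\<le>q. scale (w (Suc q) (Suc i)) (D (Suc i) (q - i)))"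
        unfolding Suc by (subst sum.atMost_Suc_shift) simp
      also have "scale (w p 0) (D 0 p) = L p" by (simp add: w_def D_def L_def)
      also have "(\<Sum>i\<le>q. scale (w (Suc q) (Suc i)) (D (Suc i) (q - i)))
          = scale (1 - r) (\<Sum>i\<le>q. scale (w q i) (pf a1 (Y i (q - i))))
          + scale (1 - r) (\<Sum>i\<le>q. scale (w q i) (\<Sum>k<q-i. pf (K (Suc k)) (Y i (q - i - Suc k))))"
        by (simp add: w_Suc_Suc D_def scale_sum scale_add_right sum.distrib)
      also have "(\<Sum>i\<le>q. scale (w q i) (pf a1 (Y i (q - i)))) = pf a1 (G q)"
        by (simp add: G_def pf_sum pf_scale)
      also have "(\<Sum>i\<le>q. scale (w q i) (\<Sum>k<q-i. pf (K (Suc k)) (Y i (q - i - Suc k))))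
          = (\<Sum>k<q. scale (r ^ Suc k) (pf (K (Suc k)) (G (q - Suc k))))"
        by (rule G_part2)
      finally show ?thesis by (simp add: add.assoc)
    qed
    have P2: "(\<Sum>i\<le>p. scale (w p i) (\<Sum>k<p-i. pf (K k) (Y i (p - i - Suc k))))
        = scale r (pf a1 (G q)) + (\<Sum>k<q. scale (r ^ Suc (Suc k)) (pf (K (Suc k)) (G (q - Suc k))))"
      unfolding G_part2 Suc by (subst sum.lessThan_Suc_shift) simp
    have T: "L p + (\<Sum>k<p. pf (M k) (G (p - Suc k)))
        = L p + pf a1 (G q) + (\<Sum>k<q. scale (r ^ Suc k) (pf (K (Suc k)) (G (q - Suc k))))"
      unfolding Suc by (subst sum.lessThan_Suc_shift) (simp add: M_def pf_scale_left add.assoc)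
    have c1: "scale (1 - r) (pf a1 (G q)) + scale r (pf a1 (G q)) = pf a1 (G q)"
      by (simp add: scale_add_left[symmetric])
    have c2: "scale (1 - r) (\<Sum>k<q. scale (r ^ Suc k) (pf (K (Suc k)) (G (q - Suc k))))
        + (\<Sum>k<q. scale (r ^ Suc (Suc k)) (pf (K (Suc k)) (G (q - Suc k))))
        = (\<Sum>k<q. scale (r ^ Suc k) (pf (K (Suc k)) (G (q - Suc k))))"
      unfolding scale_sum scale_scale scale_sum_combine
      by (intro sum.cong refl) (simp add: algebra_simps)
    have "G p = L p + (scale (1 - r) (pf a1 (G q)) + scale r (pf a1 (G q)))
       + (scale (1 - r) (\<Sum>k<q. scale (r ^ Suc k) (pf (K (Suc k)) (G (q - Suc k))))
        + (\<Sum>k<q. scale (r ^ Suc (Suc k)) (pf (K (Suc k)) (G (q - Suc k)))))"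
      unfolding G1 P1 P2 by (simp add: algebra_simps)
    also have "\<dots> = L p + (\<Sum>k<p. pf (M k) (G (p - Suc k)))"
      unfolding c1 c2 T by (simp add: add.assoc)
    finally show ?thesis .
  qed
qed

primrec lz :: "nat \<Rightarrow> ('l, 'b) zel" where
  "lz 0 = a2" | "lz (Suc n) = zmul c a2 (K n)"

lemma Lz_lz: "Lz n = pf (lz n) one"
  by (cases n) (simp_all add: Lz_def)

definition F :: "nat \<Rightarrow> ('l, 'b) ncpoly" where "F p = Sr c r (U p)"

lemma F_0: "F 0 = pf a2 one"
  by (simp add: F_def U_0 Sr_zet Sr_one circ_act_one)

lemma F_Suc: "F (Suc p) = pf a1 (F p) + scale r (circ_act c a1 (F p))"
  by (simp add: F_def U_Suc Sr_zet)

lemma F_rec: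
  assumes h1: "zmul c a1 a2 = zmul c a2 a1"
    and h2: "\<And>n. zmul c a1 (zmul c a2 (K n)) = zmul c a2 (zmul c a1 (K n))"
  shows "F p = L p + (\<Sum>k<p. pf (M k) (F (p - Suc k)))"
proof (induction p)
  case 0
  then show ?case by (simp add: F_0 L_def Lz_lz)
next
  case (Suc p)
  have lzs: "zmul c a1 (lz p) = lz (Suc p)"
    by (cases p) (simp_all add: h1 h2)
  have cL: "scale r (circ_act c a1 (L p)) = L (Suc p)"
    by (simp add: L_def Lz_lz circ_act_scale_right circ_act_zet lzs mult.commute)
  have cM: "scale r (circ_act c a1 (pf (M k) W)) = pf (M (Suc k)) W" for k W
    by (simp add: circ_act_zet M_def zmul_scale_right pf_scale_left circ_act_scale_right mult.commute)
  have "F (Suc p) = pf a1 (F p) + (L (Suc p) + (\<Sum>k<p. pf (M (Suc k)) (F (p - Suc k))))"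
    unfolding F_Suc
    by (subst (2) Suc) (simp add: circ_add circ_sum scale_add_right scale_sum cL cM)
  also have "\<dots> = L (Suc p) + (\<Sum>k<Suc p. pf (M k) (F (Suc p - Suc k)))"
    by (subst sum.lessThan_Suc_shift) (simp add: M_def)
  finally show ?case .
qed

lemma G_eq_F:
  assumes h1: "zmul c a1 a2 = zmul c a2 a1"
    and h2: "\<And>n. zmul c a1 (zmul c a2 (K n)) = zmul c a2 (zmul c a1 (K n))"
  shows "G p = F p"
proof (induction p rule: less_induct)
  case (less p)
  have "G p = L p + (\<Sum>k<p. pf (M k) (G (p - Suc k)))" by (rule G_rec)
  also have "\<dots> = L p + (\<Sum>k<p. pf (M k) (F (p - Suc k)))"
    by (intro arg_cong2[where f="(+)"] refl sum.cong) (simp add: less)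
  also have "\<dots> = F p" by (rule F_rec[OF h1 h2, symmetric])
  finally show ?case .
qed

end


lemma lookup_liftc: "lk (liftc x) a = [: lk x a :]"
  unfolding liftc_def by (simp add: map.rep_eq when_def)

lemma addf_liftc: "addf liftc"
  unfolding addf_def by (intro allI, rule poly_mapping_eqI) (simp add: lookup_liftc lookup_add)

lemma liftc_single: "liftc (sg a \<alpha>) = sg a [:\<alpha>:]"
  by (rule poly_mapping_eqI) (simp add: lookup_liftc lookup_single when_def)

lemma liftc_scale: "liftc (scale k x) = scale [:k:] (liftc x)"
  by (rule poly_mapping_eqI) (simp add: lookup_liftc)

lemma zmul_lift: "zmul (\<lambda>a b. liftc (c a b)) (liftc x) (liftc y) = liftc (zmul c x y)"
proof (rule bilin_eqI[where F="\<lambda>x y. zmul (\<lambda>a b. liftc (c a b)) (liftc x) (liftc y)" and G="\<lambda>x y. liftc (zmul c x y)"])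
  fix a \<alpha> b \<beta>
  show "zmul (\<lambda>a b. liftc (c a b)) (liftc (sg a \<alpha>)) (liftc (sg b \<beta>)) = liftc (zmul c (sg a \<alpha>) (sg b \<beta>))"
    by (simp add: liftc_single zmul_single liftc_scale mult.commute)
qed (intro addf_I addf_comp[OF addf_liftc] addf_zmul_left[OF addf_liftc] addf_zmul_right[OF addf_liftc])+

lemma zmul_comm:
  assumes "\<And>a b. c a b = c b a"
  shows "zmul c x y = zmul c y x"
proof (rule bilin_eqI[where F="\<lambda>x y. zmul c x y" and G="\<lambda>x y. zmul c y x"])
  fix a \<alpha> b \<beta>
  show "zmul c (sg a \<alpha>) (sg b \<beta>) = zmul c (sg b \<beta>) (sg a \<alpha>)"
    by (simp add: zmul_single assms mult.commute)
qed (intro addf_I)+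

lemma K_lift: "P26.K (\<lambda>a b. liftc (c a b)) (liftc a1) n = liftc (P26.K c a1 n)"
  by (induction n) (simp_all add: P26.K.simps zmul_lift)

theorem proposition2p6:
  fixes c :: "'l \<Rightarrow> 'l \<Rightarrow> ('l \<Rightarrow>\<^sub>0 'a::comm_ring_1)"
    and a1 a2 :: "'l \<Rightarrow>\<^sub>0 'a"
    and p :: nat
  assumes Qalg: "\<And>n::nat. n > 0 \<Longrightarrow> \<exists>x::'a. of_nat n * x = 1"
    and comm: "\<And>a b. c a b = c b a"
    and assoc: "\<And>x y z. zmul c (zmul c x y) z = zmul c x (zmul c y z)"
    and p_pos: "p > 0"
  shows
    "let C = (\<lambda>a b. liftc (c a b)); r = [:0, 1:] :: 'a poly;
         A1 = zet (liftc a1); A2 = zet (liftc a2)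
     in Sr C r (ncmul (ncpow A1 p) A2)
        = (\<Sum>i\<le>p. \<Sum>j\<le>p - i.
             scale ((-1) ^ j * r ^ (p - i) * (1 - r) ^ i)
               (harm C (ncmul (ncmul (ncpow A1 i) A2) (ncpow A1 j))
                       (Sr C 1 (ncpow A1 (p - i - j)))))"
proof -
  let ?C = "\<lambda>a b. liftc (c a b)"
  let ?r = "[:0, 1:] :: 'a poly"
  interpret I: P26 ?C "liftc a1" "liftc a2" ?r .
  have cm: "zmul c x y = zmul c y x" for x y by (rule zmul_comm[OF comm])
  have h1: "zmul ?C (liftc a1) (liftc a2) = zmul ?C (liftc a2) (liftc a1)"
    by (simp add: zmul_lift cm[of a1 a2])
  have h2: "zmul ?C (liftc a1) (zmul ?C (liftc a2) (I.K n)) = zmul ?C (liftc a2) (zmul ?C (liftc a1) (I.K n))" for n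
  proof -
    have "zmul c a1 (zmul c a2 k) = zmul c a2 (zmul c a1 k)" for k
      by (metis assoc cm)
    then show ?thesis by (simp add: K_lift zmul_lift)
  qed
  have LHS: "Sr ?C ?r (ncmul (ncpow (zet (liftc a1)) p) (zet (liftc a2))) = I.F p"
    by (simp add: I.F_def I.U_def I.E_def)
  have RHS: "(\<Sum>i\<le>p. \<Sum>j\<le>p - i.
             scale ((-1) ^ j * ?r ^ (p - i) * (1 - ?r) ^ i)
               (harm ?C (ncmul (ncmul (ncpow (zet (liftc a1)) i) (zet (liftc a2))) (ncpow (zet (liftc a1)) j))
                       (Sr ?C 1 (ncpow (zet (liftc a1)) (p - i - j))))) = I.G p"
    unfolding I.G_def I.Y_def I.Phi_def I.w_def I.U_def I.E_def I.B_def
    by (intro sum.cong refl) (simp add: scale_sum mult_ac)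
  show ?thesis
    unfolding Let_def LHS RHS using I.G_eq_F[OF h1 h2] by simp
qed

end
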